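(* Let $\Gamma$ be a Gromov hyperbolic metric space and let $G$ be a group acting on $\Gamma$ by isometries such that the action is of general type. Let $P$ be a positive cone of $G$. Then the $P$-orbits in $\Gamma$ accumulate on every point of $\Lambda(G)$; that is, for every $x_0\in\Gamma$, every point of $\Lambda(G)$ is an accumulation point in $\partial\Gamma$ of the set $\{p x_0 \mid p\in P\}$ (equivalently $\Lambda(G)\subseteq \Lambda(P)$).
   Context: A positive cone of a group $G$ is a subsemigroup $P\subseteq G$ such that $G$ is the disjoint union $P\sqcup P^{-1}\sqcup\{1\}$, where $P^{-1}=\{g^{-1}:g\in P\}$. For a subset $H\subseteq G$ and $x_0\in\Gamma$, $\Lambda(H)\subseteq\partial\Gamma$ denotes the set of accumulation points in the Gromov boundary $\partial\Gamma$ of the orbit $\{hx_0\mid h\in H\}$; it does not depend on $x_0$. The action is called non-elementary if $|\Lambda(G)|\geq 3$, and it is of general type if it is non-elementary and $G$ does not fix any point of $\Lambda(G)$. *)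

theory Defs
  imports "HOL-Analysis.Analysis" "HOL-Algebra.Group_Action"
begin

definition gromov_product :: "'a::metric_space \<Rightarrow> 'a \<Rightarrow> 'a \<Rightarrow> real" where
  "gromov_product w x y = (dist w x + dist w y - dist x y) / 2"

definition gromov_hyperbolic_space :: "'a::metric_space itself \<Rightarrow> bool" where
  "gromov_hyperbolic_space _ \<longleftrightarrow> (\<exists>\<delta>::real. \<delta> \<ge> 0 \<and>
     (\<forall>(w::'a) x y z. gromov_product w x z \<ge> min (gromov_product w x y) (gromov_product w y z) - \<delta>))"

definition conv_at_infinity :: "(nat \<Rightarrow> 'a::metric_space) \<Rightarrow> bool" where
  "conv_at_infinity s \<longleftrightarrow> (\<forall>w (M::real). \<exists>N. \<forall>n\<ge>N. \<forall>m\<ge>N. gromov_product w (s n) (s m) \<ge> M)"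

definition equiv_at_infinity :: "(nat \<Rightarrow> 'a::metric_space) \<Rightarrow> (nat \<Rightarrow> 'a) \<Rightarrow> bool" where
  "equiv_at_infinity s t \<longleftrightarrow> (\<forall>w (M::real). \<exists>N. \<forall>n\<ge>N. \<forall>m\<ge>N. gromov_product w (s n) (t m) \<ge> M)"

text \<open>A boundary point is the equivalence class of a sequence converging at infinity.\<close>
definition gromov_boundary :: "(nat \<Rightarrow> 'a::metric_space) set set" where
  "gromov_boundary = {{t. conv_at_infinity t \<and> equiv_at_infinity s t} | s. conv_at_infinity s}"

definition limit_set :: "('g \<Rightarrow> 'a::metric_space \<Rightarrow> 'a) \<Rightarrow> 'g set \<Rightarrow> 'a \<Rightarrow> (nat \<Rightarrow> 'a) set set" where
  "limit_set act H x0 = {\<xi> \<in> gromov_boundary. \<exists>s\<in>\<xi>. \<forall>n. s n \<in> (\<lambda>h. act h x0) ` H}"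

definition boundary_act :: "('g \<Rightarrow> 'a::metric_space \<Rightarrow> 'a) \<Rightarrow> 'g \<Rightarrow> (nat \<Rightarrow> 'a) set \<Rightarrow> (nat \<Rightarrow> 'a) set" where
  "boundary_act act g \<xi> = (\<lambda>s. act g \<circ> s) ` \<xi>"

definition isometric_action :: "('g, 'b) monoid_scheme \<Rightarrow> ('g \<Rightarrow> 'a::metric_space \<Rightarrow> 'a) \<Rightarrow> bool" where
  "isometric_action G act \<longleftrightarrow> group_action G UNIV act \<and>
     (\<forall>g\<in>carrier G. \<forall>x y. dist (act g x) (act g y) = dist x y)"

definition non_elementary :: "('g, 'b) monoid_scheme \<Rightarrow> ('g \<Rightarrow> 'a::metric_space \<Rightarrow> 'a) \<Rightarrow> bool" where
  "non_elementary G act \<longleftrightarrow> (\<forall>x0. \<exists>a b c. a \<in> limit_set act (carrier G) x0 \<and>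
     b \<in> limit_set act (carrier G) x0 \<and> c \<in> limit_set act (carrier G) x0 \<and>
     a \<noteq> b \<and> a \<noteq> c \<and> b \<noteq> c)"

definition general_type :: "('g, 'b) monoid_scheme \<Rightarrow> ('g \<Rightarrow> 'a::metric_space \<Rightarrow> 'a) \<Rightarrow> bool" where
  "general_type G act \<longleftrightarrow> non_elementary G act \<and>
     (\<forall>x0. \<not> (\<exists>\<xi>\<in>limit_set act (carrier G) x0. \<forall>g\<in>carrier G. boundary_act act g \<xi> = \<xi>))"

definition positive_cone :: "('g, 'b) monoid_scheme \<Rightarrow> 'g set \<Rightarrow> bool" where
  "positive_cone G P \<longleftrightarrow> P \<subseteq> carrier G \<and>
     (\<forall>a\<in>P. \<forall>b\<in>P. a \<otimes>\<^bsub>G\<^esub> b \<in> P) \<and>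
     carrier G = P \<union> (\<lambda>g. inv\<^bsub>G\<^esub> g) ` P \<union> {\<one>\<^bsub>G\<^esub>} \<and>
     P \<inter> (\<lambda>g. inv\<^bsub>G\<^esub> g) ` P = {} \<and> \<one>\<^bsub>G\<^esub> \<notin> P \<and>
     \<one>\<^bsub>G\<^esub> \<notin> (\<lambda>g. inv\<^bsub>G\<^esub> g) ` P"

end

theory Submission
  imports Defs
begin

lemma gp_comm: "gromov_product w x y = gromov_product w y x"
  unfolding gromov_product_def by (simp add: dist_commute)

lemma gp_base: "gromov_product w x y \<ge> gromov_product w' x y - dist w w'"
  unfolding gromov_product_def using dist_triangle[of w x w'] dist_triangle[of w' x w]
    dist_triangle[of w y w'] dist_triangle[of w' y w] by (simp add: dist_commute field_simps)

lemma gp_lip: "gromov_product w x y \<ge> gromov_product w x' y - dist x x'"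
  unfolding gromov_product_def using dist_triangle[of w x' x] dist_triangle[of x' y x] dist_triangle[of x y x']
  by (simp add: dist_commute field_simps)

lemma gp_self: "gromov_product w x x = dist w x"
  unfolding gromov_product_def by simp

lemma gp_zero: "gromov_product x x y = 0"
  unfolding gromov_product_def by simp

lemma gp_ident: "gromov_product z y x0 = dist z x0 - gromov_product x0 y z"
  unfolding gromov_product_def by (simp add: dist_commute field_simps)

lemma gp_iso:
  assumes "\<forall>x y. dist (f x) (f y) = dist x y"
  shows "gromov_product (f w) (f x) (f y) = gromov_product w x y"
  unfolding gromov_product_def using assms by simp

lemma equiv_sym: "equiv_at_infinity s t \<Longrightarrow> equiv_at_infinity t s"
  unfolding equiv_at_infinity_def by (metis gp_comm)

lemma equiv_trans:
  assumes H: "\<forall>(w::'a::metric_space) x y z. gromov_product w x z \<ge> min (gromov_product w x y) (gromov_product w y z) - \<delta>"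
    and st: "equiv_at_infinity s t" and tu: "equiv_at_infinity t u"
  shows "equiv_at_infinity s (u :: nat \<Rightarrow> 'a)"
  unfolding equiv_at_infinity_def
proof (intro allI)
  fix w M
  obtain N1 where N1: "\<forall>n\<ge>N1. \<forall>m\<ge>N1. gromov_product w (s n) (t m) \<ge> M + \<delta>"
    using st unfolding equiv_at_infinity_def by blast
  obtain N2 where N2: "\<forall>n\<ge>N2. \<forall>m\<ge>N2. gromov_product w (t n) (u m) \<ge> M + \<delta>"
    using tu unfolding equiv_at_infinity_def by blast
  show "\<exists>N. \<forall>n\<ge>N. \<forall>m\<ge>N. M \<le> gromov_product w (s n) (u m)"
  proof (intro exI allI impI)
    fix n m assume "max N1 N2 \<le> n" "max N1 N2 \<le> m"
    then have a: "gromov_product w (s n) (t (max N1 N2)) \<ge> M + \<delta>"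
      and b: "gromov_product w (t (max N1 N2)) (u m) \<ge> M + \<delta>" using N1 N2 by auto
    have "gromov_product w (s n) (u m) \<ge> min (gromov_product w (s n) (t (max N1 N2))) (gromov_product w (t (max N1 N2)) (u m)) - \<delta>"
      using H by blast
    then show "M \<le> gromov_product w (s n) (u m)" using a b by linarith
  qed
qed

lemma iso_conv:
  assumes iso: "\<forall>x y. dist (f x) (f y) = dist x y" and su: "surj f"
    and c: "conv_at_infinity s"
  shows "conv_at_infinity (f \<circ> s)"
  unfolding conv_at_infinity_def
proof (intro allI)
  fix w M
  obtain w' where w: "w = f w'" using su by (metis surj_def)
  obtain N where "\<forall>n\<ge>N. \<forall>m\<ge>N. gromov_product w' (s n) (s m) \<ge> M"
    using c unfolding conv_at_infinity_def by blast
  then show "\<exists>N. \<forall>n\<ge>N. \<forall>m\<ge>N. M \<le> gromov_product w ((f \<circ> s) n) ((f \<circ> s) m)"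
    using gp_iso[OF iso] w by auto
qed

lemma iso_equiv:
  assumes iso: "\<forall>x y. dist (f x) (f y) = dist x y" and su: "surj f"
    and c: "equiv_at_infinity s t"
  shows "equiv_at_infinity (f \<circ> s) (f \<circ> t)"
  unfolding equiv_at_infinity_def
proof (intro allI)
  fix w M
  obtain w' where w: "w = f w'" using su by (metis surj_def)
  obtain N where "\<forall>n\<ge>N. \<forall>m\<ge>N. gromov_product w' (s n) (t m) \<ge> M"
    using c unfolding equiv_at_infinity_def by blast
  then show "\<exists>N. \<forall>n\<ge>N. \<forall>m\<ge>N. M \<le> gromov_product w ((f \<circ> s) n) ((f \<circ> t) m)"
    using gp_iso[OF iso] w by auto
qed

lemma conv_refl: "conv_at_infinity s \<Longrightarrow> equiv_at_infinity s s"
  unfolding conv_at_infinity_def equiv_at_infinity_def by blast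


lemma act_facts:
  assumes "isometric_action G act"
  shows act_one: "act \<one>\<^bsub>G\<^esub> x = x"
    and act_mult: "\<And>g h x. g \<in> carrier G \<Longrightarrow> h \<in> carrier G \<Longrightarrow> act (g \<otimes>\<^bsub>G\<^esub> h) x = act g (act h x)"
    and act_iso: "\<And>g. g \<in> carrier G \<Longrightarrow> \<forall>x y. dist (act g x) (act g y) = dist x y"
proof -
  have ga: "group_action G UNIV act" using assms unfolding isometric_action_def by blast
  show "act \<one>\<^bsub>G\<^esub> x = x" using group_action.id_eq_one[OF ga] by (metis restrict_apply' UNIV_I)
  show "\<And>g h x. g \<in> carrier G \<Longrightarrow> h \<in> carrier G \<Longrightarrow> act (g \<otimes>\<^bsub>G\<^esub> h) x = act g (act h x)"
    using group_action.composition_rule[OF ga] by blast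
  show "\<And>g. g \<in> carrier G \<Longrightarrow> \<forall>x y. dist (act g x) (act g y) = dist x y"
    using assms unfolding isometric_action_def by blast
qed

lemma act_inv:
  assumes "isometric_action G act" "group G" "g \<in> carrier G"
  shows "act (inv\<^bsub>G\<^esub> g) (act g x) = x" "act g (act (inv\<^bsub>G\<^esub> g) x) = x"
proof -
  have "act (inv\<^bsub>G\<^esub> g) (act g x) = act (inv\<^bsub>G\<^esub> g \<otimes>\<^bsub>G\<^esub> g) x"
    using act_mult[OF assms(1)] assms group.inv_closed by metis
  then show "act (inv\<^bsub>G\<^esub> g) (act g x) = x" using act_one[OF assms(1)] assms group.l_inv by metis
  have "act g (act (inv\<^bsub>G\<^esub> g) x) = act (g \<otimes>\<^bsub>G\<^esub> inv\<^bsub>G\<^esub> g) x"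
    using act_mult[OF assms(1)] assms group.inv_closed by metis
  then show "act g (act (inv\<^bsub>G\<^esub> g) x) = x" using act_one[OF assms(1)] assms group.r_inv by metis
qed

lemma act_surj:
  assumes "isometric_action G act" "group G" "g \<in> carrier G"
  shows "surj (act g)"
  using act_inv(2)[OF assms] by (metis surjI)

lemma fixed_class:
  assumes H: "\<forall>(w::'a::metric_space) x y z. gromov_product w x z \<ge> min (gromov_product w x y) (gromov_product w y z) - \<delta>"
    and ia: "isometric_action G act" and gr: "group G" and g: "g \<in> carrier G"
    and cz: "conv_at_infinity (z :: nat \<Rightarrow> 'a)" and ez: "equiv_at_infinity z (act g \<circ> z)"
  shows "boundary_act act g {t. conv_at_infinity t \<and> equiv_at_infinity z t} = {t. conv_at_infinity t \<and> equiv_at_infinity z t}"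
proof -
  have gi: "inv\<^bsub>G\<^esub> g \<in> carrier G" using gr g by simp
  note iso1 = act_iso[OF ia g] and su1 = act_surj[OF ia gr g]
  note iso2 = act_iso[OF ia gi] and su2 = act_surj[OF ia gr gi]
  have bk1: "act (inv\<^bsub>G\<^esub> g) \<circ> (act g \<circ> t) = t" for t
    using act_inv(1)[OF ia gr g] by (simp add: comp_def)
  have bk2: "act g \<circ> (act (inv\<^bsub>G\<^esub> g) \<circ> t) = t" for t
    using act_inv(2)[OF ia gr g] by (simp add: comp_def)
  show ?thesis unfolding boundary_act_def
  proof (intro equalityI subsetI)
    fix u assume "u \<in> (\<circ>) (act g) ` {t. conv_at_infinity t \<and> equiv_at_infinity z t}"
    then obtain t where u: "u = act g \<circ> t" and t: "conv_at_infinity t" "equiv_at_infinity z t" by blast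
    have "conv_at_infinity u" using iso_conv[OF iso1 su1 t(1)] u by simp
    moreover have "equiv_at_infinity z u"
      using equiv_trans[OF H ez iso_equiv[OF iso1 su1 t(2)]] u by simp
    ultimately show "u \<in> {t. conv_at_infinity t \<and> equiv_at_infinity z t}" by blast
  next
    fix u assume "u \<in> {t. conv_at_infinity t \<and> equiv_at_infinity z t}"
    then have t: "conv_at_infinity u" "equiv_at_infinity z u" by auto
    define v where "v = act (inv\<^bsub>G\<^esub> g) \<circ> u"
    have "conv_at_infinity v" using iso_conv[OF iso2 su2 t(1)] v_def by simp
    moreover have "equiv_at_infinity z v"
    proof -
      have "equiv_at_infinity (act (inv\<^bsub>G\<^esub> g) \<circ> (act g \<circ> z)) (act (inv\<^bsub>G\<^esub> g) \<circ> z)"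
        using iso_equiv[OF iso2 su2 equiv_sym[OF ez]] .
      then have a: "equiv_at_infinity z (act (inv\<^bsub>G\<^esub> g) \<circ> z)" by (simp add: bk1)
      have b: "equiv_at_infinity (act (inv\<^bsub>G\<^esub> g) \<circ> z) v"
        using iso_equiv[OF iso2 su2 t(2)] v_def by simp
      show ?thesis using equiv_trans[OF H a b] .
    qed
    moreover have "u = act g \<circ> v" using bk2[of u] v_def by metis
    ultimately show "u \<in> (\<circ>) (act g) ` {t. conv_at_infinity t \<and> equiv_at_infinity z t}" by blast
  qed
qed

lemma near_seq:
  assumes H: "\<forall>(w::'a::metric_space) x y z. gromov_product w x z \<ge> min (gromov_product w x y) (gromov_product w y z) - \<delta>"
    and cs: "conv_at_infinity s"
    and near: "\<And>k. \<exists>N. \<forall>j\<ge>N. gromov_product x0 (t k) (s j) \<ge> real k"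
  shows "conv_at_infinity (t :: nat \<Rightarrow> 'a)" "equiv_at_infinity s t"
proof -
  obtain NN where NN: "\<And>k j. j \<ge> NN k \<Longrightarrow> gromov_product x0 (t k) (s j) \<ge> real k"
    using near by metis
  show "conv_at_infinity t" unfolding conv_at_infinity_def
  proof (intro allI)
    fix w M
    define N where "N = nat \<lceil>M + dist w x0 + \<delta>\<rceil>"
    show "\<exists>N. \<forall>n\<ge>N. \<forall>m\<ge>N. M \<le> gromov_product w (t n) (t m)"
    proof (intro exI allI impI)
      fix n m assume n: "N \<le> n" and m: "N \<le> m"
      define j where "j = max (NN n) (NN m)"
      have a: "gromov_product x0 (t n) (s j) \<ge> real n" using NN j_def by simp
      have b: "gromov_product x0 (s j) (t m) \<ge> real m" using NN j_def gp_comm by (metis max.cobounded2)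
      have c: "gromov_product x0 (t n) (t m) \<ge> min (gromov_product x0 (t n) (s j)) (gromov_product x0 (s j) (t m)) - \<delta>"
        using H by blast
      have d: "gromov_product w (t n) (t m) \<ge> gromov_product x0 (t n) (t m) - dist w x0" by (rule gp_base)
      have "real n \<ge> M + dist w x0 + \<delta>" "real m \<ge> M + dist w x0 + \<delta>" using n m N_def by linarith+
      then show "M \<le> gromov_product w (t n) (t m)" using a b c d by linarith
    qed
  qed
  show "equiv_at_infinity s t" unfolding equiv_at_infinity_def
  proof (intro allI)
    fix w M
    obtain N1 where N1: "\<forall>n\<ge>N1. \<forall>m\<ge>N1. gromov_product x0 (s n) (s m) \<ge> M + dist w x0 + \<delta>"
      using cs unfolding conv_at_infinity_def by blast
    define N where "N = max N1 (nat \<lceil>M + dist w x0 + \<delta>\<rceil>)"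
    show "\<exists>N. \<forall>n\<ge>N. \<forall>m\<ge>N. M \<le> gromov_product w (s n) (t m)"
    proof (intro exI allI impI)
      fix n m assume n: "N \<le> n" and m: "N \<le> m"
      define j where "j = max (NN m) N1"
      have a: "gromov_product x0 (s n) (s j) \<ge> M + dist w x0 + \<delta>" using N1 j_def n N_def by simp
      have b: "gromov_product x0 (s j) (t m) \<ge> real m" using NN j_def gp_comm by (metis max.cobounded1)
      have c: "gromov_product x0 (s n) (t m) \<ge> min (gromov_product x0 (s n) (s j)) (gromov_product x0 (s j) (t m)) - \<delta>"
        using H by blast
      have d: "gromov_product w (s n) (t m) \<ge> gromov_product x0 (s n) (t m) - dist w x0" by (rule gp_base)
      have "real m \<ge> M + dist w x0 + \<delta>" using m N_def by linarith
      then show "M \<le> gromov_product w (s n) (t m)" using a b c d by linarith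
    qed
  qed
qed


theorem theorem1p1:
  fixes G :: "('g, 'b) monoid_scheme"
    and act :: "'g \<Rightarrow> 'a::metric_space \<Rightarrow> 'a"
    and P :: "'g set"
  assumes "gromov_hyperbolic_space TYPE('a)"
    and "group G"
    and "isometric_action G act"
    and "general_type G act"
    and "positive_cone G P"
  shows "\<forall>x0. limit_set act (carrier G) x0 \<subseteq> limit_set act P x0"
proof (intro allI subsetI)
  note gr = assms(2) and ia = assms(3)
  interpret group G by (rule gr)
  fix x0 \<xi> assume xi: "\<xi> \<in> limit_set act (carrier G) x0"
  obtain \<delta> where H: "\<forall>(w::'a) x y z. gromov_product w x z \<ge> min (gromov_product w x y) (gromov_product w y z) - \<delta>"
    using assms(1) unfolding gromov_hyperbolic_space_def by blast
  obtain s where sxi: "s \<in> \<xi>" and sorb: "\<forall>n. s n \<in> (\<lambda>h. act h x0) ` carrier G"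
    using xi unfolding limit_set_def by blast
  obtain s0 where xidef: "\<xi> = {t. conv_at_infinity t \<and> equiv_at_infinity s0 t}" and "conv_at_infinity s0"
    using xi unfolding limit_set_def gromov_boundary_def by blast
  have cs: "conv_at_infinity s" and es0: "equiv_at_infinity s0 s" using sxi xidef by auto
  have "\<forall>n. \<exists>gn. gn \<in> carrier G \<and> s n = act gn x0" using sorb by blast
  from choice[OF this] obtain g where gg: "\<forall>n. g n \<in> carrier G \<and> s n = act (g n) x0" by blast
  have g: "\<And>n. g n \<in> carrier G" and sg: "\<And>n. s n = act (g n) x0" using gg by auto
  define z where "z n = act (inv\<^bsub>G\<^esub> (g n)) x0" for n
  have zg: "act (g n) (z n) = x0" for n using act_inv(2)[OF ia gr g] z_def by simp
  obtain h w M where h: "h \<in> carrier G"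
    and hwM: "\<forall>N. \<exists>n\<ge>N. \<exists>m\<ge>N. gromov_product w (z n) (act h (z m)) < M"
  proof (cases "conv_at_infinity z")
    case True
    define \<eta> where "\<eta> = {t. conv_at_infinity t \<and> equiv_at_infinity z t}"
    have "\<eta> \<in> limit_set act (carrier G) x0"
    proof -
      have "\<eta> \<in> gromov_boundary" unfolding gromov_boundary_def \<eta>_def using True by blast
      moreover have "z \<in> \<eta>" using True conv_refl \<eta>_def by blast
      moreover have "\<forall>n. z n \<in> (\<lambda>h. act h x0) ` carrier G" using g z_def by auto
      ultimately show ?thesis unfolding limit_set_def by blast
    qed
    then obtain h where h: "h \<in> carrier G" and hne: "boundary_act act h \<eta> \<noteq> \<eta>"
      using assms(4) unfolding general_type_def by blast
    have "\<not> equiv_at_infinity z (act h \<circ> z)"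
      using fixed_class[OF H ia gr h True] hne \<eta>_def by blast
    then obtain w M where "\<forall>N. \<exists>n\<ge>N. \<exists>m\<ge>N. gromov_product w (z n) (act h (z m)) < M"
      unfolding equiv_at_infinity_def by (auto simp: not_le)
    then show ?thesis using that h by blast
  next
    case False
    then obtain w M where "\<forall>N. \<exists>n\<ge>N. \<exists>m\<ge>N. gromov_product w (z n) (z m) < M"
      unfolding conv_at_infinity_def by (auto simp: not_le)
    then show ?thesis using that[of "\<one>\<^bsub>G\<^esub>" w M] act_one[OF ia] by simp
  qed
  have K: "\<exists>p\<in>P. \<exists>N. \<forall>j\<ge>N. gromov_product x0 (act p x0) (s j) \<ge> R" if R1: "R \<ge> 1" for R
  proof -
    define D where "D = dist x0 (act (inv\<^bsub>G\<^esub> h) x0)"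
    define C where "C = \<bar>M\<bar> + dist w x0"
    define B where "B = R + \<delta> + C + D"
    obtain N1 where N1: "\<forall>n\<ge>N1. \<forall>m\<ge>N1. gromov_product x0 (s n) (s m) \<ge> B"
      using cs unfolding conv_at_infinity_def by blast
    obtain n m where n: "n \<ge> N1" and m: "m \<ge> N1" and nm: "gromov_product w (z n) (act h (z m)) < M"
      using hwM by blast
    have hi: "inv\<^bsub>G\<^esub> h \<in> carrier G" using h by simp
    define a where "a = g n \<otimes>\<^bsub>G\<^esub> (h \<otimes>\<^bsub>G\<^esub> inv\<^bsub>G\<^esub> (g m))"
    define b where "b = g m \<otimes>\<^bsub>G\<^esub> (inv\<^bsub>G\<^esub> h \<otimes>\<^bsub>G\<^esub> inv\<^bsub>G\<^esub> (g n))"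
    have ac: "a \<in> carrier G" using a_def g h by simp
    have ba: "b = inv\<^bsub>G\<^esub> a" using a_def b_def g h by (simp add: inv_mult_group m_assoc)
    have ax: "act a x0 = act (g n) (act h (z m))"
      using a_def act_mult[OF ia] g h z_def by simp
    have bx: "act b x0 = act (g m) (act (inv\<^bsub>G\<^esub> h) (z n))"
      using b_def act_mult[OF ia] g hi z_def by simp
    have "gromov_product x0 (s n) (s n) \<ge> B" using N1 n by blast
    then have snn: "dist x0 (s n) \<ge> B" by (simp add: gp_self)
    have "gromov_product x0 (s m) (s m) \<ge> B" using N1 m by blast
    then have smm: "dist x0 (s m) \<ge> B" by (simp add: gp_self)
    have Cge: "gromov_product x0 (z n) (act h (z m)) < C"
      using gp_base[where w=w and w'=x0 and x="z n" and y="act h (z m)"] nm C_def by (simp add: dist_commute)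
    have Cge': "gromov_product x0 (act h (z m)) (z n) < C" using Cge gp_comm by metis
    note isogn = act_iso[OF ia g[of n]]
    have A1: "gromov_product x0 (act a x0) (s n) \<ge> B - C"
    proof -
      have "gromov_product x0 (act a x0) (s n) = gromov_product (act (g n) (z n)) (act (g n) (act h (z m))) (act (g n) x0)"
        using zg ax sg by simp
      also have "\<dots> = gromov_product (z n) (act h (z m)) x0" using gp_iso[OF isogn] .
      also have "\<dots> = dist (z n) x0 - gromov_product x0 (act h (z m)) (z n)" by (rule gp_ident)
      finally have e: "gromov_product x0 (act a x0) (s n) = dist (z n) x0 - gromov_product x0 (act h (z m)) (z n)" .
      have "dist (z n) x0 = dist x0 (s n)" using isogn zg sg by metis
      then show ?thesis using e snn Cge' by linarith
    qed
    have Da: "\<forall>j\<ge>N1. gromov_product x0 (act a x0) (s j) \<ge> R"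
    proof (intro allI impI)
      fix j assume j: "j \<ge> N1"
      have "gromov_product x0 (act a x0) (s j) \<ge> min (gromov_product x0 (act a x0) (s n)) (gromov_product x0 (s n) (s j)) - \<delta>"
        using H by blast
      moreover have "gromov_product x0 (s n) (s j) \<ge> B" using N1 n j by blast
      ultimately show "gromov_product x0 (act a x0) (s j) \<ge> R" using A1 B_def C_def D_def
        by (smt (verit) zero_le_dist abs_ge_zero)
    qed
    define \<phi> where "\<phi> = act (g m) \<circ> act (inv\<^bsub>G\<^esub> h)"
    have isophi: "\<forall>x y. dist (\<phi> x) (\<phi> y) = dist x y"
      using act_iso[OF ia g[of m]] act_iso[OF ia hi] \<phi>_def by simp
    define kx where "kx = \<phi> x0"
    have x0phi: "\<phi> (act h (z m)) = x0" using \<phi>_def act_inv(1)[OF ia gr h] zg by simp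
    have bphi: "act b x0 = \<phi> (z n)" using bx \<phi>_def by simp
    have B1: "gromov_product x0 (act b x0) kx \<ge> B - D - C"
    proof -
      have "gromov_product x0 (act b x0) kx = gromov_product (\<phi> (act h (z m))) (\<phi> (z n)) (\<phi> x0)"
        using x0phi bphi kx_def by simp
      also have "\<dots> = gromov_product (act h (z m)) (z n) x0" using gp_iso[OF isophi] .
      also have "\<dots> = dist (act h (z m)) x0 - gromov_product x0 (z n) (act h (z m))" by (rule gp_ident)
      finally have e: "gromov_product x0 (act b x0) kx = dist (act h (z m)) x0 - gromov_product x0 (z n) (act h (z m))" .
      have d1: "dist (act h (z m)) x0 = dist x0 kx" using isophi x0phi kx_def by metis
      have d2: "dist (s m) kx = D" using kx_def \<phi>_def sg D_def act_iso[OF ia g[of m]] by simp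
      have "dist x0 (s m) \<le> dist x0 kx + dist kx (s m)" by (rule dist_triangle)
      then show ?thesis using e d1 d2 smm Cge by (simp add: dist_commute)
    qed
    have Db: "\<forall>j\<ge>N1. gromov_product x0 (act b x0) (s j) \<ge> R"
    proof (intro allI impI)
      fix j assume j: "j \<ge> N1"
      have "gromov_product x0 (act b x0) (s j) \<ge> min (gromov_product x0 (act b x0) kx) (gromov_product x0 kx (s j)) - \<delta>"
        using H by blast
      moreover have "gromov_product x0 (s m) (s j) \<ge> B" using N1 m j by blast
      moreover have "gromov_product x0 kx (s j) \<ge> gromov_product x0 (s m) (s j) - dist kx (s m)" by (rule gp_lip)
      moreover have "dist kx (s m) = D" using kx_def \<phi>_def sg D_def act_iso[OF ia g[of m]] by (simp add: dist_commute)
      ultimately show "gromov_product x0 (act b x0) (s j) \<ge> R" using B1 B_def C_def D_def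
        by (smt (verit) zero_le_dist abs_ge_zero)
    qed
    have "a \<noteq> \<one>\<^bsub>G\<^esub>"
    proof
      assume "a = \<one>\<^bsub>G\<^esub>"
      then have "act a x0 = x0" using act_one[OF ia] by simp
      moreover have "gromov_product x0 (act a x0) (s N1) \<ge> R" using Da by blast
      ultimately show False using gp_zero[of x0 "s N1"] R1 by simp
    qed
    moreover have "carrier G = P \<union> (\<lambda>g. inv\<^bsub>G\<^esub> g) ` P \<union> {\<one>\<^bsub>G\<^esub>}" using assms(5) unfolding positive_cone_def by blast
    ultimately have "a \<in> P \<or> (\<exists>p\<in>P. a = inv\<^bsub>G\<^esub> p)" using ac by blast
    moreover have "p \<in> P \<Longrightarrow> a = inv\<^bsub>G\<^esub> p \<Longrightarrow> b = p" for p
      using ba assms(5) unfolding positive_cone_def by auto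
    ultimately show ?thesis using Da Db by blast
  qed
  have "\<forall>k. \<exists>pk. pk \<in> P \<and> (\<exists>N. \<forall>j\<ge>N. gromov_product x0 (act pk x0) (s j) \<ge> real k + 1)"
  proof
    fix k :: nat
    have "real k + 1 \<ge> 1" by simp
    from K[OF this] show "\<exists>pk. pk \<in> P \<and> (\<exists>N. \<forall>j\<ge>N. gromov_product x0 (act pk x0) (s j) \<ge> real k + 1)" by blast
  qed
  from choice[OF this] obtain p where pp: "\<forall>k. p k \<in> P \<and> (\<exists>N. \<forall>j\<ge>N. gromov_product x0 (act (p k) x0) (s j) \<ge> real k + 1)" by blast
  have p: "\<And>k. p k \<in> P" using pp by blast
  define t where "t k = act (p k) x0" for k
  have nt: "\<exists>N. \<forall>j\<ge>N. gromov_product x0 (t k) (s j) \<ge> real k" for k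
  proof -
    obtain N where "\<forall>j\<ge>N. gromov_product x0 (act (p k) x0) (s j) \<ge> real k + 1" using pp by blast
    then have "\<forall>j\<ge>N. gromov_product x0 (t k) (s j) \<ge> real k" using t_def by force
    then show ?thesis by blast
  qed
  have "conv_at_infinity t" "equiv_at_infinity s t" using near_seq[OF H cs nt] by auto
  then have "t \<in> \<xi>" using equiv_trans[OF H es0] xidef by blast
  moreover have "\<forall>n. t n \<in> (\<lambda>h. act h x0) ` P" using p t_def by blast
  moreover have "\<xi> \<in> gromov_boundary" using xi unfolding limit_set_def by blast
  ultimately show "\<xi> \<in> limit_set act P x0" unfolding limit_set_def by blast
qed

end
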